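(* Let $G$ be a commutative group, $G'$ a subgroup, $1<p<\infty$, and $f\in\ell^1(G')$ nonnegative (viewed also as a function on $G$, extended by zero). Then $\gamma_p(f,G)=\gamma_p(f,G')$.
   Context: For nonnegative functions $f,g$ on a commutative group $K$, $(f\star g)(x)=\max_t f(t)g(x-t)$ (max-convolution). For nonnegative $f\in\ell^1(K)$ and $1/p+1/q=1$, $\gamma_p(f,K)=\inf_{g,h}\frac{\|f\star g\star h\|_1}{\|g\|_p\|h\|_q}$, the infimum over nonzero nonnegative $g,h\in\ell^1(K)$. *)

theory Defs
  imports "HOL-Analysis.Analysis"
begin

definition add_subgroup :: "'a::ab_group_add set \<Rightarrow> bool" where
  "add_subgroup K \<longleftrightarrow> 0 \<in> K \<and> (\<forall>x\<in>K. \<forall>y\<in>K. x + y \<in> K) \<and> (\<forall>x\<in>K. - x \<in> K)"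

text \<open>Max-convolution (f * g)(x) = max_t f(t) g(x - t); for nonnegative l1 functions the
  supremum is attained, so it is a maximum.\<close>
definition maxconv :: "('a::ab_group_add \<Rightarrow> real) \<Rightarrow> ('a \<Rightarrow> real) \<Rightarrow> 'a \<Rightarrow> real" where
  "maxconv f g x = (SUP t. f t * g (x - t))"

definition lpnorm :: "real \<Rightarrow> ('a \<Rightarrow> real) \<Rightarrow> real" where
  "lpnorm p g = (\<Sum>\<^sub>\<infinity>x. \<bar>g x\<bar> powr p) powr (1 / p)"

definition nonneg_l1_on :: "'a set \<Rightarrow> ('a \<Rightarrow> real) \<Rightarrow> bool" where
  "nonneg_l1_on K g \<longleftrightarrow> (\<forall>x. g x \<ge> 0) \<and> g summable_on UNIV \<and> (\<forall>x. x \<notin> K \<longrightarrow> g x = 0)"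

definition gamma_p :: "real \<Rightarrow> ('a::ab_group_add \<Rightarrow> real) \<Rightarrow> 'a set \<Rightarrow> real" where
  "gamma_p p f K = Inf {lpnorm 1 (maxconv (maxconv f g) h) / (lpnorm p g * lpnorm (p / (p - 1)) h)
     | g h. nonneg_l1_on K g \<and> nonneg_l1_on K h \<and> g \<noteq> (\<lambda>_. 0) \<and> h \<noteq> (\<lambda>_. 0)}"

end

theory Submission
  imports Defs
begin


lemma val_le_infsum:
  fixes u :: "'b \<Rightarrow> real"
  assumes "\<And>x. u x \<ge> 0" "u summable_on UNIV"
  shows "u x \<le> infsum u UNIV"
  using finite_sum_le_infsum[OF assms(2), of "{x}"] assms(1) by auto

lemma infsum_finsum:
  fixes f :: "'c \<Rightarrow> 'b \<Rightarrow> real"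
  assumes "finite X" "\<And>x. x \<in> X \<Longrightarrow> f x summable_on A"
  shows "(\<lambda>t. \<Sum>x\<in>X. f x t) summable_on A \<and> infsum (\<lambda>t. \<Sum>x\<in>X. f x t) A = (\<Sum>x\<in>X. infsum (f x) A)"
  using assms
proof (induction X rule: finite_induct)
  case empty
  then show ?case by auto
next
  case (insert y X)
  then have s: "(\<lambda>t. \<Sum>x\<in>X. f x t) summable_on A" and e: "infsum (\<lambda>t. \<Sum>x\<in>X. f x t) A = (\<Sum>x\<in>X. infsum (f x) A)"
    by auto
  have fy: "f y summable_on A" using insert by auto
  have eq: "(\<lambda>t. \<Sum>x\<in>insert y X. f x t) = (\<lambda>t. f y t + (\<Sum>x\<in>X. f x t))"
    using insert(1,2) by simp
  show ?case unfolding eq using insert(1,2) summable_on_add[OF fy s] infsum_add[OF fy s] e by simp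
qed

definition nnl1 :: "('a \<Rightarrow> real) \<Rightarrow> bool" where
  "nnl1 u \<longleftrightarrow> (\<forall>x. u x \<ge> 0) \<and> u summable_on UNIV"

lemma nnl1_le: "nnl1 u \<Longrightarrow> u x \<le> infsum u UNIV"
  using val_le_infsum[of u x] unfolding nnl1_def by blast

lemma nnl1_nonneg: "nnl1 u \<Longrightarrow> u x \<ge> 0"
  unfolding nnl1_def by blast

lemma mc_bdd:
  assumes "nnl1 u" "nnl1 v"
  shows "bdd_above (range (\<lambda>t. u t * v (x - t)))"
proof -
  have "u t * v (x - t) \<le> infsum u UNIV * infsum v UNIV" for t
  proof -
    have a: "u t \<le> infsum u UNIV" "v (x-t) \<le> infsum v UNIV" "0 \<le> u t" "0 \<le> v (x-t)"
      by (rule nnl1_le[OF assms(1)] nnl1_le[OF assms(2)] nnl1_nonneg[OF assms(1)] nnl1_nonneg[OF assms(2)])+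
    show ?thesis by (rule mult_mono[OF a(1) a(2)]) (use a in linarith)+
  qed
  then show ?thesis by (intro bdd_aboveI2)
qed

lemma mc_upper:
  assumes "nnl1 u" "nnl1 v"
  shows "u t * v (x - t) \<le> maxconv u v x"
proof -
  have "bdd_above (range (\<lambda>t. u t * v (x - t)))" by (rule mc_bdd[OF assms])
  then show ?thesis unfolding maxconv_def by (intro cSUP_upper) simp_all
qed

lemma mc_least:
  assumes "\<And>t. u t * v (x - t) \<le> c"
  shows "maxconv u v x \<le> c"
  unfolding maxconv_def by (rule cSUP_least) (use assms in auto)

lemma mc_nonneg:
  assumes "nnl1 u" "nnl1 v"
  shows "maxconv u v x \<ge> 0"
  using mc_upper[OF assms, of 0 x] nnl1_nonneg[OF assms(1)] nnl1_nonneg[OF assms(2)]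
  by (meson mult_nonneg_nonneg order_trans)

lemma mc_nnl1:
  assumes "nnl1 u" "nnl1 v"
  shows "nnl1 (maxconv u v)"
proof -
  let ?U = "infsum u UNIV" and ?V = "infsum v UNIV"
  have un: "u t \<ge> 0" "v t \<ge> 0" for t using nnl1_nonneg[OF assms(1)] nnl1_nonneg[OF assms(2)] by auto
  have su: "u summable_on UNIV" "v summable_on UNIV" using assms nnl1_def by auto
  have cs: "(\<lambda>t. u t * v (x - t)) summable_on UNIV" for x
    by (rule summable_on_comparison_test[OF summable_on_cmult_left[OF su(1), of ?V]])
       (use un nnl1_le[OF assms(2)] in \<open>auto intro: mult_left_mono\<close>)
  have pt: "maxconv u v x \<le> (\<Sum>\<^sub>\<infinity>t. u t * v (x - t))" for x
    by (rule mc_least, rule val_le_infsum[OF _ cs]) (use un in auto)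
  have fin: "sum (maxconv u v) X \<le> ?U * ?V" if "finite X" for X
  proof -
    have "sum (maxconv u v) X \<le> (\<Sum>x\<in>X. \<Sum>\<^sub>\<infinity>t. u t * v (x - t))"
      by (rule sum_mono, rule pt)
    also have "\<dots> = (\<Sum>\<^sub>\<infinity>t. \<Sum>x\<in>X. u t * v (x - t))"
      using infsum_finsum[OF that, of "\<lambda>x t. u t * v (x - t)", OF cs] by simp
    also have "\<dots> \<le> (\<Sum>\<^sub>\<infinity>t. u t * ?V)"
    proof (rule infsum_mono)
      show "(\<lambda>t. \<Sum>x\<in>X. u t * v (x - t)) summable_on UNIV"
        using infsum_finsum[OF that, of "\<lambda>x t. u t * v (x - t)", OF cs] by simp
      show "(\<lambda>t. u t * ?V) summable_on UNIV" by (rule summable_on_cmult_left[OF su(1)])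
      fix t
      have inj: "inj_on (\<lambda>x. x - t) X" by (auto simp: inj_on_def)
      have "(\<Sum>x\<in>X. v (x - t)) = sum v ((\<lambda>x. x - t) ` X)"
        by (simp add: sum.reindex[OF inj])
      also have "\<dots> \<le> ?V"
        by (rule finite_sum_le_infsum[OF su(2)]) (use that un in auto)
      finally have "(\<Sum>x\<in>X. v (x - t)) \<le> ?V" .
      then show "(\<Sum>x\<in>X. u t * v (x - t)) \<le> u t * ?V"
        by (simp add: sum_distrib_left[symmetric] mult_left_mono un)
    qed
    also have "\<dots> = ?U * ?V" by (simp add: infsum_cmult_left su(1))
    finally show ?thesis .
  qed
  have "maxconv u v summable_on UNIV"
  proof (rule nonneg_bdd_above_summable_on)
    show "bdd_above (sum (maxconv u v) ` {F. F \<subseteq> UNIV \<and> finite F})"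
      by (rule bdd_aboveI2) (use fin in auto)
  qed (use mc_nonneg[OF assms] in auto)
  then show ?thesis unfolding nnl1_def using mc_nonneg[OF assms] by auto
qed



locale sgK =
  fixes K :: "'a::ab_group_add set"
  assumes sg: "add_subgroup K"
begin

lemma K0: "0 \<in> K" and Kadd: "x \<in> K \<Longrightarrow> y \<in> K \<Longrightarrow> x + y \<in> K"
  and Kneg: "x \<in> K \<Longrightarrow> - x \<in> K"
  using sg unfolding add_subgroup_def by auto

lemma Kdiff: "x \<in> K \<Longrightarrow> y \<in> K \<Longrightarrow> x - y \<in> K"
  using Kadd[of x "- y"] Kneg[of y] by simp

definition rep :: "'a \<Rightarrow> 'a" where "rep y = (SOME z. y - z \<in> K)"
definition R :: "'a set" where "R = range rep"

lemma rep_diff: "y - rep y \<in> K"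
  unfolding rep_def by (rule someI[of _ y]) (simp add: K0)

lemma rep_eq:
  assumes "y - y' \<in> K" shows "rep y = rep y'"
proof -
  have "(\<lambda>z. y - z \<in> K) = (\<lambda>z. y' - z \<in> K)"
  proof (rule ext)
    fix z
    have e1: "y - z = (y - y') + (y' - z)" and e2: "y' - z = (y - z) - (y - y')" by simp_all
    show "(y - z \<in> K) = (y' - z \<in> K)"
    proof
      assume "y - z \<in> K" then show "y' - z \<in> K" by (subst e2) (rule Kdiff[OF _ assms])
    next
      assume "y' - z \<in> K" then show "y - z \<in> K" by (subst e1) (rule Kadd[OF assms])
    qed
  qed
  then show ?thesis unfolding rep_def by simp
qed

lemma R_rep: "r \<in> R \<Longrightarrow> rep r = r"
  unfolding R_def using rep_eq[OF rep_diff] by auto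

lemma R_same: assumes "r \<in> R" "r' \<in> R" "r - r' \<in> K" shows "r = r'"
  using rep_eq[OF assms(3)] R_rep[OF assms(1)] R_rep[OF assms(2)] by simp

lemma inj_shift: "inj_on (\<lambda>(r, k). a + r + k) (R \<times> K)"
proof (rule inj_onI)
  fix x y assume hx: "x \<in> R \<times> K" and hy: "y \<in> R \<times> K"
    and e: "(\<lambda>(r, k). a + r + k) x = (\<lambda>(r, k). a + r + k) y"
  obtain r k where x: "x = (r, k)" by (cases x)
  obtain r' k' where y: "y = (r', k')" by (cases y)
  have h: "r \<in> R" "k \<in> K" "r' \<in> R" "k' \<in> K" using hx hy x y by auto
  from e x y have "a + r + k = a + r' + k'" by simp
  then have "r - r' = k' - k" by (simp add: algebra_simps)
  with h have "r - r' \<in> K" using Kdiff by simp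
  then have "r = r'" using R_same h by blast
  moreover from this \<open>a + r + k = a + r' + k'\<close> have "k = k'" by simp
  ultimately show "x = y" using x y by simp
qed

lemma bij_sum: "bij_betw (\<lambda>(r, k). r + k) (R \<times> K) UNIV"
proof -
  have "inj_on (\<lambda>(r, k). r + k) (R \<times> K)" using inj_shift[of 0] by simp
  moreover have "(\<lambda>(r, k). r + k) ` (R \<times> K) = UNIV"
  proof (rule set_eqI, rule iffI)
    fix y :: 'a
    have "y = (\<lambda>(r, k). r + k) (rep y, y - rep y)" by simp
    moreover have "(rep y, y - rep y) \<in> R \<times> K" using rep_diff R_def by auto
    ultimately show "y \<in> (\<lambda>(r, k). r + k) ` (R \<times> K)" by blast
  qed simp
  ultimately show ?thesis unfolding bij_betw_def by blast
qed

lemma shift_summable: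
  fixes w :: "'a \<Rightarrow> real"
  assumes "w summable_on UNIV"
  shows "(\<lambda>k. w (a + k)) summable_on B"
proof -
  have i: "inj_on (\<lambda>k. a + k) B" by (auto simp: inj_on_def)
  have "w summable_on ((\<lambda>k. a + k) ` B)" by (rule summable_on_subset_banach[OF assms]) auto
  then show ?thesis using summable_on_reindex[OF i, of w] by (simp add: o_def)
qed

lemma fub_eq:
  fixes w :: "'a \<Rightarrow> real"
  assumes "w summable_on UNIV"
  shows "infsum w UNIV = (\<Sum>\<^sub>\<infinity>r\<in>R. \<Sum>\<^sub>\<infinity>k\<in>K. w (r + k))"
    and "(\<lambda>r. \<Sum>\<^sub>\<infinity>k\<in>K. w (r + k)) summable_on R"
proof -
  have s: "(\<lambda>x. w ((\<lambda>(r, k). r + k) x)) summable_on (R \<times> K)"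
    using summable_on_reindex_bij_betw[OF bij_sum] assms by blast
  have s': "(\<lambda>(r,k). w (r + k)) summable_on (R \<times> K)"
    using s by (simp add: case_prod_beta')
  have "infsum w UNIV = infsum (\<lambda>x. w ((\<lambda>(r, k). r + k) x)) (R \<times> K)"
    using infsum_reindex_bij_betw[OF bij_sum] by metis
  also have "\<dots> = infsum (\<lambda>(r,k). w (r + k)) (R \<times> K)" by (simp add: case_prod_beta')
  also have "\<dots> = (\<Sum>\<^sub>\<infinity>r\<in>R. \<Sum>\<^sub>\<infinity>k\<in>K. w (r + k))"
    using infsum_Sigma_banach[OF s'] by simp
  finally show "infsum w UNIV = (\<Sum>\<^sub>\<infinity>r\<in>R. \<Sum>\<^sub>\<infinity>k\<in>K. w (r + k))" .
  show "(\<lambda>r. \<Sum>\<^sub>\<infinity>k\<in>K. w (r + k)) summable_on R"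
    using summable_on_SigmaD[OF s'] shift_summable[OF assms] by simp
qed

lemma fub_le:
  fixes w :: "'a \<Rightarrow> real"
  assumes "w summable_on UNIV" "\<And>x. w x \<ge> 0"
  shows "(\<Sum>\<^sub>\<infinity>r\<in>R. \<Sum>\<^sub>\<infinity>k\<in>K. w (a + r + k)) \<le> infsum w UNIV"
    and "(\<lambda>r. \<Sum>\<^sub>\<infinity>k\<in>K. w (a + r + k)) summable_on R"
proof -
  let ?psi = "\<lambda>(r, k). a + r + k"
  have sw: "w summable_on (?psi ` (R \<times> K))" by (rule summable_on_subset_banach[OF assms(1)]) auto
  then have s: "(w \<circ> ?psi) summable_on (R \<times> K)" using summable_on_reindex[OF inj_shift] by blast
  have s': "(\<lambda>(r,k). w (a + r + k)) summable_on (R \<times> K)"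
    using s by (simp add: o_def case_prod_beta')
  have "(\<Sum>\<^sub>\<infinity>r\<in>R. \<Sum>\<^sub>\<infinity>k\<in>K. w (a + r + k)) = infsum (\<lambda>(r,k). w (a + r + k)) (R \<times> K)"
    using infsum_Sigma_banach[OF s'] by simp
  also have "\<dots> = infsum (w \<circ> ?psi) (R \<times> K)" by (simp add: o_def case_prod_beta')
  also have "\<dots> = infsum w (?psi ` (R \<times> K))" using infsum_reindex[OF inj_shift] by metis
  also have "\<dots> \<le> infsum w UNIV"
    by (rule infsum_mono_neutral[OF sw assms(1)]) (use assms(2) in auto)
  finally show "(\<Sum>\<^sub>\<infinity>r\<in>R. \<Sum>\<^sub>\<infinity>k\<in>K. w (a + r + k)) \<le> infsum w UNIV" .
  have inner: "(\<lambda>k. w (a + r + k)) summable_on K" for r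
    using shift_summable[OF assms(1), of "a + r" K] by (simp add: add.assoc)
  show "(\<lambda>r. \<Sum>\<^sub>\<infinity>k\<in>K. w (a + r + k)) summable_on R"
    using summable_on_SigmaD[OF s'] inner by simp
qed

end



lemma final_arith:
  fixes c u v A B L p q :: real
  assumes p1: "1 < p" and q: "q = p / (p - 1)" and pos: "c > 0" "u > 0" "v > 0" "A > 0" "B > 0"
    and i: "c * A * v powr q \<le> B powr (q - 1) * L"
    and ii: "c * B * u powr p \<le> A powr (p - 1) * L"
  shows "c * (u * v) \<le> L"
proof (rule ccontr)
  assume "\<not> c * (u * v) \<le> L"
  then have lt: "L < c * (u * v)" by simp
  have q1: "q - 1 = 1 / (p - 1)" using p1 q by (simp add: field_simps)
  have qp: "(p - 1) * (q - 1) = 1" using p1 q1 by simp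
  have q1pos: "q - 1 > 0" using q1 p1 by simp
  have vq: "v powr q = v powr (q - 1) * v" using powr_add[of v "q - 1" 1] pos by simp
  have up: "u powr p = u powr (p - 1) * u" using powr_add[of u "p - 1" 1] pos by simp
  have Bq: "B powr (q - 1) > 0" "v powr (q - 1) > 0" "A powr (p - 1) > 0" "u powr (p - 1) > 0"
    using pos by simp_all
  have "c * A * v powr q < B powr (q - 1) * (c * (u * v))"
    using i mult_strict_left_mono[OF lt Bq(1)] by linarith
  then have "c * v * (A * v powr (q - 1)) < c * v * (B powr (q - 1) * u)"
    unfolding vq by (simp add: algebra_simps)
  then have "A * v powr (q - 1) < B powr (q - 1) * u"
    using pos by (simp add: mult_less_cancel_left_pos)
  then have a1: "A / u < (B / v) powr (q - 1)"
    using pos Bq by (simp add: powr_divide field_simps)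
  have "c * B * u powr p < A powr (p - 1) * (c * (u * v))"
    using ii mult_strict_left_mono[OF lt Bq(3)] by linarith
  then have "c * u * (B * u powr (p - 1)) < c * u * (A powr (p - 1) * v)"
    unfolding up by (simp add: algebra_simps)
  then have "B * u powr (p - 1) < A powr (p - 1) * v"
    using pos by (simp add: mult_less_cancel_left_pos)
  then have b1: "B / v < (A / u) powr (p - 1)"
    using pos Bq by (simp add: powr_divide field_simps)
  have "(B / v) powr (q - 1) < ((A / u) powr (p - 1)) powr (q - 1)"
    by (rule powr_less_mono2[OF q1pos _ b1]) (use pos in simp)
  also have "\<dots> = A / u" using qp pos by (simp add: powr_powr)
  finally show False using a1 by simp
qed

lemma powr_le_lin:
  fixes x M s :: real
  assumes "0 \<le> x" "x \<le> M" "1 \<le> s"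
  shows "x powr s \<le> M powr (s - 1) * x"
proof (cases "x = 0")
  case True then show ?thesis by simp
next
  case False
  have "x powr s = x powr (s - 1) * x" using powr_add[of x "s - 1" 1] False assms(1) by simp
  also have "\<dots> \<le> M powr (s - 1) * x"
    by (rule mult_right_mono[OF powr_mono2]) (use assms in auto)
  finally show ?thesis .
qed

lemma half:
  fixes X Y :: "'b \<Rightarrow> real" and Rs :: "'b set"
  assumes ne: "Rs \<noteq> {}" and bdd: "bdd_above (X ` Rs)" and c: "c > 0" and W: "W > 0" and s: "s \<ge> 1"
    and Y0: "\<And>r. r \<in> Rs \<Longrightarrow> 0 \<le> Y r" and YB: "\<And>r. r \<in> Rs \<Longrightarrow> Y r \<le> B"
    and Ys: "(\<lambda>r. Y r powr s) summable_on Rs" and YW: "infsum (\<lambda>r. Y r powr s) Rs = W"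
    and X0: "\<And>r. r \<in> Rs \<Longrightarrow> 0 \<le> X r"
    and key: "\<And>a S. a \<in> Rs \<Longrightarrow> finite S \<Longrightarrow> S \<subseteq> Rs \<Longrightarrow> c * X a * sum Y S \<le> L"
  shows "c * (SUP r\<in>Rs. X r) * W \<le> B powr (s - 1) * L"
proof -
  have each: "c * X a * W \<le> B powr (s - 1) * L" if a: "a \<in> Rs" for a
  proof -
    have "c * X a * W = infsum (\<lambda>r. c * X a * Y r powr s) Rs"
      using YW infsum_cmult_right[of "c * X a" "\<lambda>r. Y r powr s" Rs] Ys by simp
    also have "\<dots> \<le> B powr (s - 1) * L"
    proof (rule infsum_le_finite_sums)
      show "(\<lambda>r. c * X a * Y r powr s) summable_on Rs" using summable_on_cmult_right[OF Ys] by simp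
      fix S assume S: "finite S" "S \<subseteq> Rs"
      have "(\<Sum>r\<in>S. c * X a * Y r powr s) = c * X a * (\<Sum>r\<in>S. Y r powr s)"
        by (simp add: sum_distrib_left)
      also have "\<dots> \<le> c * X a * (\<Sum>r\<in>S. B powr (s - 1) * Y r)"
        by (rule mult_left_mono[OF sum_mono]) (use S Y0 YB s c X0[OF a] powr_le_lin in auto)
      also have "\<dots> = B powr (s - 1) * (c * X a * sum Y S)"
        by (simp add: sum_distrib_left algebra_simps)
      also have "\<dots> \<le> B powr (s - 1) * L"
        by (rule mult_left_mono[OF key[OF a S]]) simp
      finally show "(\<Sum>r\<in>S. c * X a * Y r powr s) \<le> B powr (s - 1) * L" .
    qed
    finally show ?thesis .
  qed
  have "(SUP r\<in>Rs. X r) \<le> B powr (s - 1) * L / (c * W)"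
  proof (rule cSUP_least[OF ne])
    fix r assume "r \<in> Rs"
    then show "X r \<le> B powr (s - 1) * L / (c * W)"
      using each[of r] c W by (simp add: pos_le_divide_eq algebra_simps)
  qed
  then show ?thesis using c W by (simp add: pos_le_divide_eq algebra_simps)
qed



lemma lp_nonneg: "lpnorm s w \<ge> 0"
  unfolding lpnorm_def by simp

lemma lp_pow:
  assumes "\<And>x. w x \<ge> 0" "s > 0"
  shows "lpnorm s w powr s = (\<Sum>\<^sub>\<infinity>x. w x powr s)"
proof -
  have N: "(\<Sum>\<^sub>\<infinity>x. w x powr s) \<ge> 0" by (rule infsum_nonneg) simp
  have "lpnorm s w = (\<Sum>\<^sub>\<infinity>x. w x powr s) powr (1 / s)"
    unfolding lpnorm_def using assms(1) by (simp add: abs_of_nonneg)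
  then show ?thesis using N assms(2) by (simp add: powr_powr)
qed

lemma lp_one:
  assumes "\<And>x. w x \<ge> 0"
  shows "lpnorm 1 w = infsum w UNIV"
proof -
  have N: "infsum w UNIV \<ge> 0" by (rule infsum_nonneg) (use assms in simp)
  show ?thesis unfolding lpnorm_def using assms N by (simp add: abs_of_nonneg)
qed

lemma lp_zero: "lpnorm s (\<lambda>_. 0) = 0"
  unfolding lpnorm_def by simp

lemma pow_summable:
  assumes "nnl1 w" "s \<ge> 1"
  shows "(\<lambda>x. w x powr s) summable_on UNIV"
proof (rule summable_on_comparison_test)
  show "(\<lambda>x. infsum w UNIV powr (s - 1) * w x) summable_on UNIV"
    using assms(1) unfolding nnl1_def by (intro summable_on_cmult_right) simp
  fix x
  show "w x powr s \<le> infsum w UNIV powr (s - 1) * w x"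
    by (rule powr_le_lin[OF nnl1_nonneg[OF assms(1)] nnl1_le[OF assms(1)] assms(2)])
qed simp

lemma lp_pos:
  assumes "nnl1 w" "s \<ge> 1" "w \<noteq> (\<lambda>_. 0)"
  shows "lpnorm s w > 0"
proof -
  obtain x0 where x0: "w x0 \<noteq> 0" using assms(3) by auto
  then have "w x0 > 0" using nnl1_nonneg[OF assms(1), of x0] by simp
  then have "0 < w x0 powr s" by simp
  also have "\<dots> \<le> (\<Sum>\<^sub>\<infinity>x. w x powr s)"
    by (rule val_le_infsum[OF _ pow_summable[OF assms(1,2)]]) simp
  finally have "(\<Sum>\<^sub>\<infinity>x. w x powr s) > 0" .
  then show ?thesis
    unfolding lpnorm_def using nnl1_nonneg[OF assms(1)] by (simp add: abs_of_nonneg)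
qed

lemma mc_zero_out:
  assumes "\<And>x. x \<notin> K \<Longrightarrow> u x = 0" "\<And>x. x \<notin> K \<Longrightarrow> v x = 0" "add_subgroup K" "x \<notin> K"
  shows "maxconv u v x = 0"
proof -
  have "u t * v (x - t) = 0" for t
  proof (cases "t \<in> K")
    case True
    have "x - t \<notin> K"
    proof
      assume "x - t \<in> K"
      then have "(x - t) + t \<in> K" using True assms(3) unfolding add_subgroup_def by blast
      then show False using assms(4) by simp
    qed
    then show ?thesis using assms(2) by simp
  qed (use assms(1) in simp)
  then have e: "(\<lambda>t. u t * v (x - t)) = (\<lambda>t. 0)" by (intro ext) simp
  show ?thesis unfolding maxconv_def e by simp
qed

definition rs :: "'a set \<Rightarrow> ('a::ab_group_add \<Rightarrow> real) \<Rightarrow> 'a \<Rightarrow> 'a \<Rightarrow> real" where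
  "rs K w r = (\<lambda>k. if k \<in> K then w (r + k) else 0)"

lemma rs_le: "nnl1 w \<Longrightarrow> rs K w r y \<le> w (r + y)"
  unfolding rs_def using nnl1_nonneg by auto

lemma rs_nnl1:
  assumes "nnl1 w"
  shows "nnl1 (rs K w r)" "nonneg_l1_on K (rs K w r)"
proof -
  have s: "(\<lambda>k. w (r + k)) summable_on K"
  proof -
    have i: "inj_on (\<lambda>k. r + k) K" by (auto simp: inj_on_def)
    have "w summable_on ((\<lambda>k. r + k) ` K)"
      by (rule summable_on_subset_banach) (use assms nnl1_def in auto)
    then show ?thesis using summable_on_reindex[OF i, of w] by (simp add: o_def)
  qed
  have "rs K w r summable_on UNIV"
    using summable_on_cong_neutral[of UNIV K "rs K w r" "\<lambda>k. w (r + k)"] s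
    unfolding rs_def by auto
  then show "nnl1 (rs K w r)" "nonneg_l1_on K (rs K w r)"
    unfolding nnl1_def nonneg_l1_on_def rs_def using nnl1_nonneg[OF assms] by auto
qed

lemma rs_pow:
  "(\<Sum>\<^sub>\<infinity>k. rs K w r k powr s) = (\<Sum>\<^sub>\<infinity>k\<in>K. w (r + k) powr s)"
  by (rule infsum_cong_neutral) (auto simp: rs_def)

lemma mc_point:
  assumes f: "nnl1 f" and g: "nnl1 g" and h: "nnl1 h"
  shows "maxconv (maxconv f (rs K g a)) (rs K h b) k \<le> maxconv (maxconv f g) h (a + b + k)"
proof (rule mc_least)
  fix s
  have fg: "nnl1 (maxconv f g)" by (rule mc_nnl1[OF f g])
  have m1: "maxconv f (rs K g a) s \<le> maxconv f g (a + s)"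
  proof (rule mc_least)
    fix t
    have "f t * rs K g a (s - t) \<le> f t * g (a + s - t)"
      using rs_le[OF g, of K a "s - t"] nnl1_nonneg[OF f, of t]
      by (simp add: mult_left_mono add_diff_eq)
    also have "\<dots> \<le> maxconv f g (a + s)" by (rule mc_upper[OF f g])
    finally show "f t * rs K g a (s - t) \<le> maxconv f g (a + s)" .
  qed
  have m2: "rs K h b (k - s) \<le> h (a + b + k - (a + s))"
    using rs_le[OF h, of K b "k - s"] by (simp add: algebra_simps)
  have "maxconv f (rs K g a) s * rs K h b (k - s) \<le> maxconv f g (a + s) * h (a + b + k - (a + s))"
    by (rule mult_mono[OF m1 m2]) (use mc_nonneg[OF fg h] mc_nonneg[OF f rs_nnl1(1)[OF g]] nnl1_nonneg[OF fg] nnl1_nonneg[OF h] nnl1_nonneg[OF rs_nnl1(1)[OF h]] in auto)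
  also have "\<dots> \<le> maxconv (maxconv f g) h (a + b + k)" by (rule mc_upper[OF fg h])
  finally show "maxconv f (rs K g a) s * rs K h b (k - s) \<le> maxconv (maxconv f g) h (a + b + k)" .
qed



lemma powr_le_cancel:
  fixes x y s :: real
  assumes "0 \<le> x" "0 \<le> y" "s > 0" "x powr s \<le> y powr s"
  shows "x \<le> y"
proof (rule ccontr)
  assume "\<not> x \<le> y"
  then have "y powr s < x powr s" using powr_less_mono2[of s y x] assms by simp
  then show False using assms(4) by simp
qed

context sgK
begin

lemma shift_le:
  fixes w :: "'a \<Rightarrow> real"
  assumes "w summable_on UNIV" "\<And>x. w x \<ge> 0"
  shows "(\<Sum>\<^sub>\<infinity>k\<in>K. w (a + k)) \<le> infsum w UNIV"
proof -
  have i: "inj_on (\<lambda>k. a + k) K" by (auto simp: inj_on_def)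
  have sw: "w summable_on ((\<lambda>k. a + k) ` K)" by (rule summable_on_subset_banach[OF assms(1)]) auto
  have "(\<Sum>\<^sub>\<infinity>k\<in>K. w (a + k)) = infsum w ((\<lambda>k. a + k) ` K)"
    using infsum_reindex[OF i, of w] by (simp add: o_def)
  also have "\<dots> \<le> infsum w UNIV"
    by (rule infsum_mono_neutral[OF sw assms(1)]) (use assms(2) in auto)
  finally show ?thesis .
qed

lemma key:
  fixes f g h :: "'a \<Rightarrow> real" and p c :: real
  assumes p1: "1 < p" and f: "nonneg_l1_on K f" and g: "nnl1 g" and h: "nnl1 h"
    and gnz: "g \<noteq> (\<lambda>_. 0)" and hnz: "h \<noteq> (\<lambda>_. 0)" and c: "c > 0"
    and H1: "\<And>g' h'. nonneg_l1_on K g' \<Longrightarrow> nonneg_l1_on K h' \<Longrightarrow> g' \<noteq> (\<lambda>_. 0) \<Longrightarrow> h' \<noteq> (\<lambda>_. 0) \<Longrightarrow>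
       c * (lpnorm p g' * lpnorm (p / (p - 1)) h') \<le> lpnorm 1 (maxconv (maxconv f g') h')"
  shows "c * (lpnorm p g * lpnorm (p / (p - 1)) h) \<le> lpnorm 1 (maxconv (maxconv f g) h)"
proof -
  define q where "q = p / (p - 1)"
  have q1: "q > 1" using p1 unfolding q_def by (simp add: field_simps)
  have fn: "nnl1 f" using f unfolding nonneg_l1_on_def nnl1_def by simp
  have fK: "\<And>x. x \<notin> K \<Longrightarrow> f x = 0" using f unfolding nonneg_l1_on_def by simp
  define F where "F = maxconv (maxconv f g) h"
  have Fn: "nnl1 F" unfolding F_def by (rule mc_nnl1[OF mc_nnl1[OF fn g] h])
  have Fs: "F summable_on UNIV" and F0: "\<And>x. F x \<ge> 0" using Fn unfolding nnl1_def by auto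
  define L where "L = infsum F UNIV"
  have L: "lpnorm 1 F = L" unfolding L_def by (rule lp_one[OF F0])
  have L0: "L \<ge> 0" unfolding L_def by (rule infsum_nonneg) (use F0 in auto)
  define Gr where "Gr r = lpnorm p (rs K g r)" for r
  define Hr where "Hr r = lpnorm q (rs K h r)" for r
  have Gr0: "Gr r \<ge> 0" and Hr0: "Hr r \<ge> 0" for r unfolding Gr_def Hr_def by (simp_all add: lp_nonneg)
  have Grp: "Gr r powr p = (\<Sum>\<^sub>\<infinity>k\<in>K. g (r + k) powr p)" for r
  proof -
    have "lpnorm p (rs K g r) powr p = (\<Sum>\<^sub>\<infinity>k. rs K g r k powr p)"
      by (rule lp_pow) (use nnl1_nonneg[OF rs_nnl1(1)[OF g]] p1 in auto)
    then show ?thesis unfolding Gr_def by (simp add: rs_pow)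
  qed
  have Hrq: "Hr r powr q = (\<Sum>\<^sub>\<infinity>k\<in>K. h (r + k) powr q)" for r
  proof -
    have "lpnorm q (rs K h r) powr q = (\<Sum>\<^sub>\<infinity>k. rs K h r k powr q)"
      by (rule lp_pow) (use nnl1_nonneg[OF rs_nnl1(1)[OF h]] q1 in auto)
    then show ?thesis unfolding Hr_def by (simp add: rs_pow)
  qed

  have step3: "c * (Gr a * Hr b) \<le> (\<Sum>\<^sub>\<infinity>k\<in>K. F (a + b + k))" for a b
  proof (cases "rs K g a = (\<lambda>_. 0) \<or> rs K h b = (\<lambda>_. 0)")
    case True
    then have "Gr a = 0 \<or> Hr b = 0" unfolding Gr_def Hr_def using lp_zero by metis
    moreover have "(\<Sum>\<^sub>\<infinity>k\<in>K. F (a + b + k)) \<ge> 0" by (rule infsum_nonneg) (use F0 in auto)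
    ultimately show ?thesis by auto
  next
    case False
    define M where "M = maxconv (maxconv f (rs K g a)) (rs K h b)"
    have Mn: "nnl1 M" unfolding M_def by (rule mc_nnl1[OF mc_nnl1[OF fn rs_nnl1(1)[OF g]] rs_nnl1(1)[OF h]])
    have "c * (Gr a * Hr b) \<le> lpnorm 1 M"
      unfolding Gr_def Hr_def M_def q_def using False by (intro H1 rs_nnl1(2) g h) auto
    also have "\<dots> = infsum M UNIV" by (rule lp_one[OF nnl1_nonneg[OF Mn]])
    also have "\<dots> \<le> (\<Sum>\<^sub>\<infinity>k\<in>K. F (a + b + k))"
    proof (rule infsum_mono_neutral)
      show "M summable_on UNIV" using Mn unfolding nnl1_def by simp
      show "(\<lambda>k. F (a + b + k)) summable_on K" using shift_summable[OF Fs, of "a + b" K] by simp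
      fix x
      show "x \<in> UNIV \<inter> K \<Longrightarrow> M x \<le> F (a + b + x)"
        unfolding M_def F_def by (rule mc_point[OF fn g h])
      show "x \<in> K - UNIV \<Longrightarrow> 0 \<le> F (a + b + x)" by simp
      assume x: "x \<in> UNIV - K"
      have z1: "\<And>y. y \<notin> K \<Longrightarrow> maxconv f (rs K g a) y = 0"
        by (rule mc_zero_out[OF fK _ sg]) (auto simp: rs_def)
      have "M x = 0" unfolding M_def
        by (rule mc_zero_out[OF z1 _ sg]) (use x in \<open>auto simp: rs_def\<close>)
      then show "M x \<le> 0" by simp
    qed
    finally show ?thesis .
  qed

  have inner0: "(\<Sum>\<^sub>\<infinity>k\<in>K. F (a + r + k)) \<ge> 0" for a r by (rule infsum_nonneg) (use F0 in auto)
  have step4: "c * Gr a * sum Hr S \<le> L" if a: "a \<in> R" and S: "finite S" "S \<subseteq> R" for a S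
  proof -
    have "c * Gr a * sum Hr S = (\<Sum>r\<in>S. c * (Gr a * Hr r))" by (simp add: sum_distrib_left algebra_simps)
    also have "\<dots> \<le> (\<Sum>r\<in>S. \<Sum>\<^sub>\<infinity>k\<in>K. F (a + r + k))" by (rule sum_mono) (rule step3)
    also have "\<dots> \<le> (\<Sum>\<^sub>\<infinity>r\<in>R. \<Sum>\<^sub>\<infinity>k\<in>K. F (a + r + k))"
      by (rule finite_sum_le_infsum[OF fub_le(2)[OF Fs F0] S]) (rule inner0)
    also have "\<dots> \<le> L" unfolding L_def by (rule fub_le(1)[OF Fs F0])
    finally show ?thesis .
  qed
  have step4': "c * Hr b * sum Gr S \<le> L" if b: "b \<in> R" and S: "finite S" "S \<subseteq> R" for b S
  proof -
    have "c * Hr b * sum Gr S = (\<Sum>r\<in>S. c * (Gr r * Hr b))" by (simp add: sum_distrib_left algebra_simps)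
    also have "\<dots> \<le> (\<Sum>r\<in>S. \<Sum>\<^sub>\<infinity>k\<in>K. F (r + b + k))" by (rule sum_mono) (rule step3)
    also have "\<dots> = (\<Sum>r\<in>S. \<Sum>\<^sub>\<infinity>k\<in>K. F (b + r + k))" by (simp add: add.commute)
    also have "\<dots> \<le> (\<Sum>\<^sub>\<infinity>r\<in>R. \<Sum>\<^sub>\<infinity>k\<in>K. F (b + r + k))"
      by (rule finite_sum_le_infsum[OF fub_le(2)[OF Fs F0] S]) (rule inner0)
    also have "\<dots> \<le> L" unfolding L_def by (rule fub_le(1)[OF Fs F0])
    finally show ?thesis .
  qed

  define u where "u = lpnorm p g"
  define v where "v = lpnorm q h"
  have g0: "\<And>x. g x \<ge> 0" by (rule nnl1_nonneg[OF g])
  have h0: "\<And>x. h x \<ge> 0" by (rule nnl1_nonneg[OF h])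
  have gps: "(\<lambda>x. g x powr p) summable_on UNIV" by (rule pow_summable[OF g]) (use p1 in simp)
  have hqs: "(\<lambda>x. h x powr q) summable_on UNIV" by (rule pow_summable[OF h]) (use q1 in simp)
  have up: "u powr p = (\<Sum>\<^sub>\<infinity>x. g x powr p)" unfolding u_def by (rule lp_pow[OF g0]) (use p1 in simp)
  have vq: "v powr q = (\<Sum>\<^sub>\<infinity>x. h x powr q)" unfolding v_def by (rule lp_pow[OF h0]) (use q1 in simp)
  have upR: "u powr p = (\<Sum>\<^sub>\<infinity>r\<in>R. Gr r powr p)" and GrS: "(\<lambda>r. Gr r powr p) summable_on R"
  proof -
    have e1: "(\<lambda>r. \<Sum>\<^sub>\<infinity>k\<in>K. g (r + k) powr p) = (\<lambda>r. Gr r powr p)" using Grp by (intro ext) simp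
    show "u powr p = (\<Sum>\<^sub>\<infinity>r\<in>R. Gr r powr p)" using fub_eq(1)[OF gps] up unfolding e1 by simp
    show "(\<lambda>r. Gr r powr p) summable_on R" using fub_eq(2)[OF gps] unfolding e1 .
  qed
  have vqR: "v powr q = (\<Sum>\<^sub>\<infinity>r\<in>R. Hr r powr q)" and HrS: "(\<lambda>r. Hr r powr q) summable_on R"
  proof -
    have e1: "(\<lambda>r. \<Sum>\<^sub>\<infinity>k\<in>K. h (r + k) powr q) = (\<lambda>r. Hr r powr q)" using Hrq by (intro ext) simp
    show "v powr q = (\<Sum>\<^sub>\<infinity>r\<in>R. Hr r powr q)" using fub_eq(1)[OF hqs] vq unfolding e1 by simp
    show "(\<lambda>r. Hr r powr q) summable_on R" using fub_eq(2)[OF hqs] unfolding e1 .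
  qed
  have Gru: "Gr r \<le> u" for r
    by (rule powr_le_cancel[where s=p, OF Gr0]) (use p1 Grp up shift_le[OF gps] u_def lp_nonneg in auto)
  have Hrv: "Hr r \<le> v" for r
    by (rule powr_le_cancel[where s=q, OF Hr0]) (use q1 Hrq vq shift_le[OF hqs] v_def lp_nonneg in auto)
  have bddG: "bdd_above (Gr ` R)" using Gru by (intro bdd_aboveI2) 
  have bddH: "bdd_above (Hr ` R)" using Hrv by (intro bdd_aboveI2)
  have Rne: "R \<noteq> {}" unfolding R_def by simp
  define A where "A = (SUP r\<in>R. Gr r)"
  define B where "B = (SUP r\<in>R. Hr r)"
  have GA: "r \<in> R \<Longrightarrow> Gr r \<le> A" for r unfolding A_def by (rule cSUP_upper[OF _ bddG])
  have HB: "r \<in> R \<Longrightarrow> Hr r \<le> B" for r unfolding B_def by (rule cSUP_upper[OF _ bddH])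
  have u0: "u > 0" unfolding u_def by (rule lp_pos[OF g _ gnz]) (use p1 in simp)
  have v0: "v > 0" unfolding v_def by (rule lp_pos[OF h _ hnz]) (use q1 in simp)
  have posr: "\<exists>r\<in>R. 0 < lpnorm s (rs K w r)" if w: "nnl1 w" "w \<noteq> (\<lambda>_. 0)" and s: "s \<ge> 1" for w s
  proof -
    obtain x0 where x0: "w x0 \<noteq> 0" using w(2) by auto
    have "rs K w (rep x0) (x0 - rep x0) = w x0" unfolding rs_def using rep_diff by simp
    then have "rs K w (rep x0) \<noteq> (\<lambda>_. 0)" using x0 by auto
    then have "0 < lpnorm s (rs K w (rep x0))" by (rule lp_pos[OF rs_nnl1(1)[OF w(1)] s])
    moreover have "rep x0 \<in> R" unfolding R_def by simp
    ultimately show ?thesis by blast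
  qed
  obtain r1 where r1: "r1 \<in> R" "Gr r1 > 0" using posr[OF g gnz, of p] p1 unfolding Gr_def by auto
  obtain r2 where r2: "r2 \<in> R" "Hr r2 > 0" using posr[OF h hnz, of q] q1 unfolding Hr_def by auto
  have A0: "A > 0" using GA[OF r1(1)] r1(2) by simp
  have B0: "B > 0" using HB[OF r2(1)] r2(2) by simp
  have i: "c * A * v powr q \<le> B powr (q - 1) * L"
    unfolding A_def
    by (rule half[OF Rne bddG c _ _ Hr0 HB HrS vqR[symmetric] Gr0 step4])
       (use v0 q1 in auto)
  have ii: "c * B * u powr p \<le> A powr (p - 1) * L"
    unfolding B_def
    by (rule half[OF Rne bddH c _ _ Gr0 GA GrS upR[symmetric] Hr0 step4'])
       (use u0 p1 in auto)
  have "c * (u * v) \<le> L"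
    by (rule final_arith[OF p1 q_def c u0 v0 A0 B0 i ii])
  then show ?thesis unfolding u_def v_def q_def[symmetric] L[symmetric] F_def .
qed

end



lemma nn_to_nnl1: "nonneg_l1_on K g \<Longrightarrow> nnl1 g"
  unfolding nonneg_l1_on_def nnl1_def by simp

theorem mainTheorem10:
  fixes f :: "'a::ab_group_add \<Rightarrow> real" and K :: "'a set" and p :: real
  assumes "add_subgroup K"
    and "1 < p"
    and "nonneg_l1_on K f"
  shows "gamma_p p f UNIV = gamma_p p f K"
proof -
  interpret sgK K by unfold_locales (rule assms(1))
  define q where "q = p / (p - 1)"
  have q1: "q > 1" using assms(2) unfolding q_def by (simp add: field_simps)
  define rat where "rat g h = lpnorm 1 (maxconv (maxconv f g) h) / (lpnorm p g * lpnorm q h)" for g h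
  define S where "S A = {rat g h | g h. nonneg_l1_on A g \<and> nonneg_l1_on A h \<and> g \<noteq> (\<lambda>_. 0) \<and> h \<noteq> (\<lambda>_. 0)}" for A
  have gam: "gamma_p p f A = Inf (S A)" for A unfolding gamma_p_def S_def rat_def q_def ..
  have rat0: "rat g h \<ge> 0" for g h unfolding rat_def by (simp add: lp_nonneg)
  have bddU: "bdd_below (S UNIV)" unfolding S_def using rat0 by (intro bdd_belowI[of _ 0]) auto
  have bddK: "bdd_below (S K)" unfolding S_def using rat0 by (intro bdd_belowI[of _ 0]) auto
  have sub: "S K \<subseteq> S UNIV" unfolding S_def nonneg_l1_on_def by blast
  define d where "d = (\<lambda>x::'a. if x = 0 then 1 else (0::real))"
  have dK: "nonneg_l1_on K d"
  proof -
    have "d summable_on UNIV"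
      by (rule finite_nonzero_values_imp_summable_on) (simp add: d_def)
    then show ?thesis unfolding nonneg_l1_on_def d_def using K0 by auto
  qed
  have dnz: "d \<noteq> (\<lambda>_. 0)" unfolding d_def by (metis zero_neq_one)
  have neK: "S K \<noteq> {}" unfolding S_def using dK dnz by blast
  then have neU: "S UNIV \<noteq> {}" using sub by blast
  define c where "c = Inf (S K)"
  have c0: "c \<ge> 0" unfolding c_def by (rule cInf_greatest[OF neK]) (use rat0 S_def in auto)
  have le1: "Inf (S UNIV) \<le> c" unfolding c_def by (rule cInf_superset_mono[OF neK bddU sub])
  have le2: "c \<le> Inf (S UNIV)"
  proof (rule cInf_greatest[OF neU])
    fix x assume "x \<in> S UNIV"
    then obtain g h where x: "x = rat g h" and g: "nonneg_l1_on UNIV g" and h: "nonneg_l1_on UNIV h"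
      and gnz: "g \<noteq> (\<lambda>_. 0)" and hnz: "h \<noteq> (\<lambda>_. 0)" unfolding S_def by blast
    show "c \<le> x"
    proof (cases "c = 0")
      case True then show ?thesis using rat0 x by simp
    next
      case False
      then have cpos: "c > 0" using c0 by simp
      have H1: "c * (lpnorm p g' * lpnorm (p / (p - 1)) h') \<le> lpnorm 1 (maxconv (maxconv f g') h')"
        if g': "nonneg_l1_on K g'" and h': "nonneg_l1_on K h'" and nz: "g' \<noteq> (\<lambda>_. 0)" "h' \<noteq> (\<lambda>_. 0)" for g' h'
      proof -
        have "c \<le> rat g' h'" unfolding c_def by (rule cInf_lower[OF _ bddK]) (use g' h' nz S_def in blast)
        moreover have "lpnorm p g' * lpnorm q h' > 0"
          using lp_pos[OF nn_to_nnl1[OF g'] _ nz(1), of p] lp_pos[OF nn_to_nnl1[OF h'] _ nz(2), of q] assms(2) q1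
          by simp
        ultimately show ?thesis unfolding rat_def q_def by (simp add: pos_le_divide_eq)
      qed
      have "c * (lpnorm p g * lpnorm q h) \<le> lpnorm 1 (maxconv (maxconv f g) h)"
        unfolding q_def
        by (rule key[OF assms(2) assms(3) nn_to_nnl1[OF g] nn_to_nnl1[OF h] gnz hnz cpos H1])
      moreover have "lpnorm p g * lpnorm q h > 0"
        using lp_pos[OF nn_to_nnl1[OF g] _ gnz, of p] lp_pos[OF nn_to_nnl1[OF h] _ hnz, of q] assms(2) q1
        by simp
      ultimately show ?thesis unfolding x rat_def by (simp add: pos_le_divide_eq)
    qed
  qed
  show ?thesis unfolding gam c_def[symmetric] using le1 le2 by simp
qed


end
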